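(* In the three-dimensional Heisenberg setting of the context, let $\gamma=\exp(z_\gamma Z)$ with $z_\gamma\neq0$, let $E>0$, $\ell\in\mathbb Z\setminus\{0\}$ and $z_0\in\mathbb R\setminus\{0\}$. There exist $u_0,v_0$ such that the spiraling magnetic geodesic with $\sigma(0)=e$ and parameters $(u_0,v_0,z_0)$ has energy $E$ and is $\gamma$-periodic with period $\omega=2\pi A\ell/z_0$ if and only if one of the following holds (writing $r=\frac{z_\gamma}{\pi A\ell}$): (1a) $E>|B|$, $1<\frac{2E}{E+B}<r$, and $z_0=-\sqrt{\frac{E^2-B^2}{r-1}}$; (1b) $E>|B|$, $1<\frac{2E}{E-B}<r$, and $z_0=+\sqrt{\frac{E^2-B^2}{r-1}}$; (2a) $0<E<B$, $\frac{2E}{E-|B|}<r<\frac{2E}{E+|B|}<1$, and $z_0=-\sqrt{\frac{E^2-B^2}{r-1}}$; (2b) $B<0$, $0<E<|B|$, $\frac{2E}{E-|B|}<r<\frac{2E}{E+|B|}<1$, and $z_0=+\sqrt{\frac{E^2-B^2}{r-1}}$; (3a) $E=B$, $\ell=\frac{z_\gamma}{\pi A}$, and $-2B<z_0<0$; (3b) $E=-B$, $\ell=\frac{z_\gamma}{\pi A}$, and $0<z_0<-2B$. In all cases the period is $\omega=2\pi A\ell/z_0$, and one may take any $u_0,v_0$ with $u_0^2+v_0^2=A(E^2-(z_0+B)^2)$.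
   Context: Let $\mathfrak h$ be the real Lie algebra with basis $X,Y,Z$ whose only nonzero bracket among basis vectors is $[X,Y]=Z$, and $H$ the simply connected three-dimensional Heisenberg group with Lie algebra $\mathfrak h$; $\exp:\mathfrak h\to H$ is a diffeomorphism with $\exp(U)\exp(V)=\exp(U+V+\tfrac12[U,V])$. Fix $A>0$; $g$ is the left-invariant metric with $\{X/\sqrt A,Y/\sqrt A,Z\}$ orthonormal. With $\{\alpha,\beta,\zeta\}$ the dual basis and $B\in\mathbb R$, the magnetic form is $\Omega=d(B\zeta)=-B\alpha\wedge\beta$; magnetic geodesics solve $\nabla_{\sigma'}\sigma'=F\sigma'$ where $g(Fu,v)=\Omega(u,v)$. The magnetic geodesics with $\sigma(0)=e$ are exactly $\sigma(t)=\exp(x(t)X+y(t)Y+z(t)Z)$ with, for parameters $(u_0,v_0,z_0)\in\mathbb R^3$: if $z_0\ne0$, $x(t)=\frac{u_0}{z_0}\sin(\frac{z_0t}{A})-\frac{v_0}{z_0}(1-\cos(\frac{z_0t}{A}))$, $y(t)=\frac{u_0}{z_0}(1-\cos(\frac{z_0t}{A}))+\frac{v_0}{z_0}\sin(\frac{z_0t}{A})$, $z(t)=(z_0+B+\frac{u_0^2+v_0^2}{2Az_0})t-\frac{u_0^2+v_0^2}{2z_0^2}\sin(\frac{z_0t}{A})$; if $z_0=0$, $x=u_0t/A$, $y=v_0t/A$, $z=Bt$. The energy is $E=|\sigma'|$, with $E^2=(u_0^2+v_0^2)/A+(z_0+B)^2$. Such a geodesic is spiraling if $z_0\neq0$ and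 $(u_0,v_0)\neq(0,0)$. For $\gamma\neq e$, $\sigma$ is $\gamma$-periodic with period $\omega\ne0$ if $\gamma\sigma(t)=\sigma(t+\omega)$ for all $t$; for a spiraling $\gamma$-periodic geodesic with $\gamma$ central, necessarily $\omega z_0=2\pi A\ell$ for some $\ell\in\mathbb Z\setminus\{0\}$. *)

theory Defs
  imports "HOL-Analysis.Analysis"
begin

text \<open>The simply connected 3-dimensional Heisenberg group H, identified with \<real>^3 via
  exponential coordinates: the triple (x,y,z) stands for exp(xX + yY + zZ).  By the
  BCH formula exp(U)exp(V) = exp(U + V + [U,V]/2) with [X,Y] = Z, the group law reads:\<close>

type_synonym heis = "real \<times> real \<times> real"

definition hmul :: "heis \<Rightarrow> heis \<Rightarrow> heis" where
  "hmul p q = (case p of (x, y, z) \<Rightarrow> case q of (x', y', z') \<Rightarrow>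
      (x + x', y + y', z + z' + (x * y' - y * x') / 2))"

definition central_elt :: "real \<Rightarrow> heis" where
  "central_elt z = (0, 0, z)"

text \<open>The magnetic geodesic through e with parameters (u0,v0,z0), for metric
  parameter A and magnetic strength B.\<close>
definition mag_geod :: "real \<Rightarrow> real \<Rightarrow> real \<Rightarrow> real \<Rightarrow> real \<Rightarrow> real \<Rightarrow> heis" where
  "mag_geod A B u0 v0 z0 t =
    (if z0 \<noteq> 0 then
       (u0 / z0 * sin (z0 * t / A) - v0 / z0 * (1 - cos (z0 * t / A)),
        u0 / z0 * (1 - cos (z0 * t / A)) + v0 / z0 * sin (z0 * t / A),
        (z0 + B + (u0\<^sup>2 + v0\<^sup>2) / (2 * A * z0)) * t
          - (u0\<^sup>2 + v0\<^sup>2) / (2 * z0\<^sup>2) * sin (z0 * t / A))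
     else (u0 * t / A, v0 * t / A, B * t))"

text \<open>Energy E = |sigma'| of that geodesic (constant along it).\<close>
definition mag_energy :: "real \<Rightarrow> real \<Rightarrow> real \<Rightarrow> real \<Rightarrow> real \<Rightarrow> real" where
  "mag_energy A B u0 v0 z0 = sqrt ((u0\<^sup>2 + v0\<^sup>2) / A + (z0 + B)\<^sup>2)"

definition spiraling :: "real \<Rightarrow> real \<Rightarrow> real \<Rightarrow> bool" where
  "spiraling u0 v0 z0 \<longleftrightarrow> z0 \<noteq> 0 \<and> (u0, v0) \<noteq> (0, 0)"

definition periodic_with :: "heis \<Rightarrow> (real \<Rightarrow> heis) \<Rightarrow> real \<Rightarrow> bool" where
  "periodic_with \<gamma> \<sigma> \<omega> \<longleftrightarrow> \<omega> \<noteq> 0 \<and> (\<forall>t. hmul \<gamma> (\<sigma> t) = \<sigma> (t + \<omega>))"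

end

theory Submission
  imports Defs
begin


lemma sc2pi: fixes l :: int and x :: real shows "sin (x + 2 * pi * of_int l) = sin x" "cos (x + 2 * pi * of_int l) = cos x"
proof -
  have c: "cos (2 * pi * of_int l) = 1" using cos_one_2pi_int[of "2 * pi * of_int l"] by (metis mult.commute mult.left_commute)
  have s: "sin (2 * pi * of_int l) = 0" using sin_npi_int[of "2*l"] by (simp add: mult_ac)
  show "sin (x + 2 * pi * of_int l) = sin x" "cos (x + 2 * pi * of_int l) = cos x"
    by (simp_all add: sin_add cos_add c s)
qed

lemma key:
  fixes A B zg E z0 u0 v0 :: real and l :: int
  assumes A: "A > 0" and "zg \<noteq> 0" and E: "E > 0" and l: "l \<noteq> 0" and z0: "z0 \<noteq> 0"
  shows "(spiraling u0 v0 z0 \<and> mag_energy A B u0 v0 z0 = E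
      \<and> periodic_with (central_elt zg) (mag_geod A B u0 v0 z0) (2 * pi * A * real_of_int l / z0))
   \<longleftrightarrow> (u0\<^sup>2 + v0\<^sup>2 = A * (E\<^sup>2 - (z0 + B)\<^sup>2) \<and> (z0 + B)\<^sup>2 < E\<^sup>2
        \<and> (zg / (pi * A * real_of_int l) - 1) * z0\<^sup>2 = E\<^sup>2 - B\<^sup>2)"
proof -
  define \<rho> where "\<rho> = u0\<^sup>2 + v0\<^sup>2"
  define \<omega> where "\<omega> = 2 * pi * A * real_of_int l / z0"
  define c where "c = z0 + B + \<rho> / (2 * A * z0)"
  have \<rho>0: "\<rho> \<ge> 0" unfolding \<rho>_def by simp
  have sp: "spiraling u0 v0 z0 \<longleftrightarrow> \<rho> > 0" unfolding spiraling_def \<rho>_def using z0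
    by (metis add_pos_nonneg not_real_square_gt_zero power2_eq_square prod.inject sum_power2_gt_zero_iff zero_less_power2)
  have en: "mag_energy A B u0 v0 z0 = E \<longleftrightarrow> \<rho> = A * (E\<^sup>2 - (z0 + B)\<^sup>2)"
  proof -
    have "mag_energy A B u0 v0 z0 = E \<longleftrightarrow> \<rho> / A + (z0 + B)\<^sup>2 = E\<^sup>2"
      unfolding mag_energy_def \<rho>_def[symmetric] using E \<rho>0 A
      by (metis (no_types, lifting) add_nonneg_nonneg divide_nonneg_pos less_eq_real_def real_sqrt_pow2 real_sqrt_unique zero_le_power2)
    also have "\<dots> \<longleftrightarrow> \<rho> = A * (E\<^sup>2 - (z0 + B)\<^sup>2)" using A by (auto simp: field_simps)
    finally show ?thesis .
  qed
  have arg: "z0 * (t + \<omega>) / A = z0 * t / A + 2 * pi * of_int l" for t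
    unfolding \<omega>_def using A z0 by (simp add: field_simps)
  have per: "periodic_with (central_elt zg) (mag_geod A B u0 v0 z0) \<omega> \<longleftrightarrow> c * \<omega> = zg"
  proof -
    have om: "\<omega> \<noteq> 0" unfolding \<omega>_def using A z0 l by simp
    have "hmul (central_elt zg) (mag_geod A B u0 v0 z0 t) = mag_geod A B u0 v0 z0 (t + \<omega>)
       \<longleftrightarrow> c * \<omega> = zg" for t
      unfolding hmul_def central_elt_def mag_geod_def using z0
      apply (simp add: arg sc2pi c_def \<rho>_def[symmetric] del: times_divide_eq_left times_divide_eq_right)
      apply (simp add: algebra_simps add_divide_distrib)
      apply linarith
      done
    then show ?thesis unfolding periodic_with_def using om by blast
  qed
  have pe: "c * \<omega> = zg \<longleftrightarrow> 2 * z0\<^sup>2 + 2 * B * z0 + \<rho> / A = zg / (pi * A * real_of_int l) * z0\<^sup>2"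
    unfolding c_def \<omega>_def using A z0 l by (auto simp: field_simps power2_eq_square)
  define q where "q = zg / (pi * A * real_of_int l)"
  have fin: "(0 < \<rho> \<and> \<rho> = A * (E\<^sup>2 - (z0 + B)\<^sup>2) \<and> 2 * z0\<^sup>2 + 2 * B * z0 + \<rho> / A = q * z0\<^sup>2)
     \<longleftrightarrow> (\<rho> = A * (E\<^sup>2 - (z0 + B)\<^sup>2) \<and> (z0 + B)\<^sup>2 < E\<^sup>2 \<and> (q - 1) * z0\<^sup>2 = E\<^sup>2 - B\<^sup>2)"
  proof (cases "\<rho> = A * (E\<^sup>2 - (z0 + B)\<^sup>2)")
    case True
    have d: "\<rho> / A = E\<^sup>2 - (z0 + B)\<^sup>2" using True A by simp
    have p: "0 < \<rho> \<longleftrightarrow> (z0 + B)\<^sup>2 < E\<^sup>2" using True A by (simp add: zero_less_mult_iff)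
    show ?thesis unfolding d p using True by (auto simp: algebra_simps power2_eq_square)
  qed auto
  show ?thesis
    using fin unfolding sp en per[unfolded \<omega>_def] pe[unfolded \<omega>_def] \<rho>_def[symmetric] q_def
    by blast
qed



lemma sq_lt_iff_neg: fixes z c :: real assumes "z < 0" "c > 0" shows "(-c < z) \<longleftrightarrow> z\<^sup>2 < c\<^sup>2"
proof -
  have "\<bar>z\<bar> < \<bar>c\<bar> \<longleftrightarrow> z\<^sup>2 < c\<^sup>2" using abs_le_square_iff[of c z] by (simp add: not_le[symmetric])
  moreover have "(-c < z) \<longleftrightarrow> \<bar>z\<bar> < \<bar>c\<bar>" using assms by auto
  ultimately show ?thesis by simp
qed

lemma sq_lt_iff_pos: fixes z c :: real assumes "z > 0" "c > 0" shows "(z < c) \<longleftrightarrow> z\<^sup>2 < c\<^sup>2"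
  using sq_lt_iff_neg[of "-z" c] assms by simp

lemma nsq: fixes z X :: real assumes "z \<noteq> 0" "X \<ge> 0" shows "z = - sqrt X \<longleftrightarrow> z < 0 \<and> z\<^sup>2 = X"
proof
  assume "z = - sqrt X" then show "z < 0 \<and> z\<^sup>2 = X" using assms by auto
next
  assume h: "z < 0 \<and> z\<^sup>2 = X"
  then have "sqrt X = \<bar>z\<bar>" by auto
  then show "z = - sqrt X" using h by auto
qed

lemma psq: fixes z X :: real assumes "z \<noteq> 0" "X \<ge> 0" shows "z = sqrt X \<longleftrightarrow> z > 0 \<and> z\<^sup>2 = X"
  using nsq[of "-z" X] assms by auto



lemma H1: fixes k a b w :: real assumes "k > 0" "a > 0" "k * w = a * b" shows "w < a\<^sup>2 \<longleftrightarrow> b < k * a"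
proof -
  have "w < a\<^sup>2 \<longleftrightarrow> k * w < k * a\<^sup>2" using assms(1) by simp
  also have "\<dots> \<longleftrightarrow> a * b < a * (k * a)" by (simp add: assms(3) power2_eq_square algebra_simps)
  also have "\<dots> \<longleftrightarrow> b < k * a" using assms by simp
  finally show ?thesis .
qed

lemma H2: fixes k a c w :: real assumes "k > 0" "c > 0" "k * w = a * c" shows "c\<^sup>2 < w \<longleftrightarrow> k * c < a"
proof -
  have "c\<^sup>2 < w \<longleftrightarrow> k * c\<^sup>2 < k * w" using assms(1) by simp
  also have "\<dots> \<longleftrightarrow> c * (k * c) < c * a" by (simp add: assms(3) power2_eq_square algebra_simps)
  also have "\<dots> \<longleftrightarrow> k * c < a" using assms by simp
  finally show ?thesis .
qed

lemma caseI:
  fixes E B z0 r :: real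
  assumes E: "E > \<bar>B\<bar>" and z0: "z0 \<noteq> 0"
  shows "((1 < 2 * E / (E + B) \<and> 2 * E / (E + B) < r \<and> z0 = - sqrt ((E\<^sup>2 - B\<^sup>2) / (r - 1)))
    \<or> (1 < 2 * E / (E - B) \<and> 2 * E / (E - B) < r \<and> z0 = sqrt ((E\<^sup>2 - B\<^sup>2) / (r - 1))))
    \<longleftrightarrow> ((z0 + B)\<^sup>2 < E\<^sup>2 \<and> (r - 1) * z0\<^sup>2 = E\<^sup>2 - B\<^sup>2)"
proof -
  define a where "a = E + B"
  define b where "b = E - B"
  have a: "a > 0" and b: "b > 0" using E unfolding a_def b_def by auto
  have D: "E\<^sup>2 - B\<^sup>2 = a * b" unfolding a_def b_def by (simp add: algebra_simps power2_eq_square)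
  have q1: "1 < 2 * E / a" "1 < 2 * E / b" using a b unfolding a_def b_def by (auto simp: field_simps)
  have q2: "2 * E / a < r \<longleftrightarrow> b < (r - 1) * a" "2 * E / b < r \<longleftrightarrow> a < (r - 1) * b"
    using a b unfolding a_def b_def by (auto simp: field_simps)
  have sq: "(z0 + B)\<^sup>2 < E\<^sup>2 \<longleftrightarrow> (-a < z0 \<and> z0 < b)"
  proof -
    have "(z0 + B)\<^sup>2 < E\<^sup>2 \<longleftrightarrow> \<bar>z0 + B\<bar> < \<bar>E\<bar>" using abs_le_square_iff[of E "z0 + B"] by (simp add: not_le[symmetric])
    also have "\<dots> \<longleftrightarrow> (-a < z0 \<and> z0 < b)" unfolding a_def b_def using E by auto
    finally show ?thesis .
  qed
  show ?thesis unfolding a_def[symmetric] b_def[symmetric] D sq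
  proof
    assume h: "(1 < 2 * E / a \<and> 2 * E / a < r \<and> z0 = - sqrt (a * b / (r - 1)))
      \<or> (1 < 2 * E / b \<and> 2 * E / b < r \<and> z0 = sqrt (a * b / (r - 1)))"
    then show "(- a < z0 \<and> z0 < b) \<and> (r - 1) * z0\<^sup>2 = a * b"
    proof
      assume h1: "1 < 2 * E / a \<and> 2 * E / a < r \<and> z0 = - sqrt (a * b / (r - 1))"
      have r: "r - 1 > 0" using h1 by linarith
      have X: "a * b / (r - 1) \<ge> 0" using a b r by simp
      have z: "z0 < 0 \<and> z0\<^sup>2 = a * b / (r - 1)" using h1 nsq[OF z0 X] by simp
      have e: "(r - 1) * z0\<^sup>2 = a * b" using z r by simp
      have "z0\<^sup>2 < a\<^sup>2" using H1[OF r a e] h1 q2 by simp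
      then have "-a < z0" using sq_lt_iff_neg[of z0 a] z a by simp
      then show ?thesis using e z b by simp
    next
      assume h1: "1 < 2 * E / b \<and> 2 * E / b < r \<and> z0 = sqrt (a * b / (r - 1))"
      have r: "r - 1 > 0" using h1 by linarith
      have X: "a * b / (r - 1) \<ge> 0" using a b r by simp
      have z: "z0 > 0 \<and> z0\<^sup>2 = a * b / (r - 1)" using h1 psq[OF z0 X] by simp
      have e: "(r - 1) * z0\<^sup>2 = b * a" using z r by simp
      have "z0\<^sup>2 < b\<^sup>2" using H1[OF r b e] h1 q2 by simp
      then have "z0 < b" using sq_lt_iff_pos[of z0 b] z b by simp
      then show ?thesis using e z a by (simp add: mult.commute)
    qed
  next
    assume h: "(- a < z0 \<and> z0 < b) \<and> (r - 1) * z0\<^sup>2 = a * b"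
    have zp: "z0\<^sup>2 > 0" using z0 by simp
    have "(r - 1) * z0\<^sup>2 > 0" using h a b by simp
    then have r: "r - 1 > 0" using zp by (simp add: zero_less_mult_iff)
    have "z0\<^sup>2 = (r - 1) * z0\<^sup>2 / (r - 1)" using r by simp
    also have "\<dots> = a * b / (r - 1)" using h by simp
    finally have zz: "z0\<^sup>2 = a * b / (r - 1)" .
    have X: "a * b / (r - 1) \<ge> 0" using a b r by simp
    show "(1 < 2 * E / a \<and> 2 * E / a < r \<and> z0 = - sqrt (a * b / (r - 1)))
      \<or> (1 < 2 * E / b \<and> 2 * E / b < r \<and> z0 = sqrt (a * b / (r - 1)))"
    proof (cases "z0 < 0")
      case True
      have "z0\<^sup>2 < a\<^sup>2" using sq_lt_iff_neg[of z0 a] True a h by simp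
      then have "b < (r - 1) * a" using H1[OF r a, of "z0\<^sup>2" b] h by simp
      moreover have "z0 = - sqrt (a * b / (r - 1))" using nsq[OF z0 X] True zz by simp
      ultimately show ?thesis using q1(1) q2(1) by simp
    next
      case False
      then have zp: "z0 > 0" using z0 by simp
      have e: "(r - 1) * z0\<^sup>2 = b * a" using h by (simp add: mult.commute)
      have "z0\<^sup>2 < b\<^sup>2" using sq_lt_iff_pos[of z0 b] zp b h by simp
      then have "a < (r - 1) * b" using H1[OF r b e] by simp
      moreover have "z0 = sqrt (a * b / (r - 1))" using psq[OF z0 X] zp zz by simp
      ultimately show ?thesis using q1(2) q2(2) by simp
    qed
  qed
qed



lemma caseIIcore:
  fixes E c a z0 r :: real
  assumes c: "c > 0" and a: "a > 0" and z0: "z0 \<noteq> 0"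
  shows "(c < (1 - r) * a \<and> (1 - r) * c < a \<and> z0 < 0 \<and> z0\<^sup>2 = a * c / (1 - r))
     \<longleftrightarrow> (-a < z0 \<and> z0 < -c \<and> (1 - r) * z0\<^sup>2 = a * c)"
proof
  assume h: "c < (1 - r) * a \<and> (1 - r) * c < a \<and> z0 < 0 \<and> z0\<^sup>2 = a * c / (1 - r)"
  have "(1 - r) * a > 0" using h c by linarith
  then have m: "1 - r > 0" using a by (simp add: zero_less_mult_iff)
  have e: "(1 - r) * z0\<^sup>2 = a * c" using h m by simp
  have "z0\<^sup>2 < a\<^sup>2" using H1[OF m a, of "z0\<^sup>2" c] e h by simp
  then have 1: "-a < z0" using sq_lt_iff_neg[of z0 a] h a by simp
  have "c\<^sup>2 < z0\<^sup>2" using H2[OF m c, of "z0\<^sup>2" a] e h by simp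
  then have "\<bar>c\<bar> < \<bar>z0\<bar>" using abs_le_square_iff[of z0 c] by (simp add: not_le[symmetric])
  then have "\<not> (-c \<le> z0)" using h c by auto
  then show "-a < z0 \<and> z0 < -c \<and> (1 - r) * z0\<^sup>2 = a * c" using 1 e by simp
next
  assume h: "-a < z0 \<and> z0 < -c \<and> (1 - r) * z0\<^sup>2 = a * c"
  have zp: "z0\<^sup>2 > 0" using z0 by simp
  have "(1 - r) * z0\<^sup>2 > 0" using h a c by simp
  then have m: "1 - r > 0" using zp by (simp add: zero_less_mult_iff)
  have zn: "z0 < 0" using h c by simp
  have "z0\<^sup>2 < a\<^sup>2" using sq_lt_iff_neg[of z0 a] zn a h by simp
  then have 1: "c < (1 - r) * a" using H1[OF m a, of "z0\<^sup>2" c] h by simp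
  have "\<bar>c\<bar> < \<bar>z0\<bar>" using h c zn by auto
  then have "c\<^sup>2 < z0\<^sup>2" using abs_le_square_iff[of z0 c] by (simp add: not_le[symmetric])
  then have 2: "(1 - r) * c < a" using H2[OF m c, of "z0\<^sup>2" a] h by simp
  show "c < (1 - r) * a \<and> (1 - r) * c < a \<and> z0 < 0 \<and> z0\<^sup>2 = a * c / (1 - r)"
  proof -
    have "z0\<^sup>2 = (1 - r) * z0\<^sup>2 / (1 - r)" using m by simp
    also have "\<dots> = a * c / (1 - r)" using h by simp
    finally have "z0\<^sup>2 = a * c / (1 - r)" .
    then show ?thesis using 1 2 zn by simp
  qed
qed

lemma caseIIa:
  fixes E B z0 r :: real
  assumes E: "0 < E" "E < B" and z0: "z0 \<noteq> 0"
  shows "(2 * E / (E - B) < r \<and> r < 2 * E / (E + B) \<and> 2 * E / (E + B) < 1 \<and> z0 = - sqrt ((E\<^sup>2 - B\<^sup>2) / (r - 1)))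
     \<longleftrightarrow> ((z0 + B)\<^sup>2 < E\<^sup>2 \<and> (r - 1) * z0\<^sup>2 = E\<^sup>2 - B\<^sup>2)"
proof -
  define a where "a = E + B"
  define c where "c = B - E"
  have a: "a > 0" and c: "c > 0" using E unfolding a_def c_def by auto
  have X0: "E\<^sup>2 - B\<^sup>2 = - (a * c)" unfolding a_def c_def by (simp add: algebra_simps power2_eq_square)
  have X: "(E\<^sup>2 - B\<^sup>2) / (r - 1) = a * c / (1 - r)" unfolding X0
    by (metis divide_minus_right minus_diff_eq divide_minus_left minus_minus)
  have q: "2 * E / (E + B) < 1" using E by (simp add: field_simps)
  have q1: "r < 2 * E / (E + B) \<longleftrightarrow> c < (1 - r) * a"
  proof -
    have "r < 2 * E / (E + B) \<longleftrightarrow> r * a < 2 * E" using a unfolding a_def by (simp add: pos_less_divide_eq)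
    also have "\<dots> \<longleftrightarrow> c < (1 - r) * a" unfolding a_def c_def by (simp add: algebra_simps)
    finally show ?thesis .
  qed
  have q2: "2 * E / (E - B) < r \<longleftrightarrow> (1 - r) * c < a"
  proof -
    have "E - B = - c" unfolding c_def by simp
    then have "2 * E / (E - B) < r \<longleftrightarrow> - (2 * E) / c < r" by simp
    also have "\<dots> \<longleftrightarrow> - (2 * E) < r * c" using pos_divide_less_eq[OF c, of "-(2*E)" r] by simp
    also have "\<dots> \<longleftrightarrow> (1 - r) * c < a" unfolding a_def c_def by (simp add: algebra_simps)
    finally show ?thesis .
  qed
  have sq: "(z0 + B)\<^sup>2 < E\<^sup>2 \<longleftrightarrow> (-a < z0 \<and> z0 < -c)"
  proof -
    have "(z0 + B)\<^sup>2 < E\<^sup>2 \<longleftrightarrow> \<bar>z0 + B\<bar> < \<bar>E\<bar>" using abs_le_square_iff[of E "z0 + B"] by (simp add: not_le[symmetric])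
    also have "\<dots> \<longleftrightarrow> (-a < z0 \<and> z0 < -c)" unfolding a_def c_def using E by auto
    finally show ?thesis .
  qed
  have e: "(r - 1) * z0\<^sup>2 = E\<^sup>2 - B\<^sup>2 \<longleftrightarrow> (1 - r) * z0\<^sup>2 = a * c"
    unfolding a_def c_def by (auto simp: algebra_simps power2_eq_square)
  have Xn: "a * c / (1 - r) \<ge> 0 \<or> \<not> (c < (1 - r) * a)"
  proof (cases "c < (1 - r) * a")
    case True
    then have "(1 - r) * a > 0" using c by linarith
    then have "1 - r > 0" using a by (simp add: zero_less_mult_iff)
    then show ?thesis using a c by simp
  qed simp
  show ?thesis
    unfolding X sq e using caseIIcore[OF c a z0, of r] q q1 q2 nsq[OF z0, of "a * c / (1 - r)"] Xn by blast
qed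

lemma caseIIb:
  fixes E B z0 r :: real
  assumes E: "0 < E" "E < - B" and z0: "z0 \<noteq> 0"
  shows "(2 * E / (E + B) < r \<and> r < 2 * E / (E - B) \<and> 2 * E / (E - B) < 1 \<and> z0 = sqrt ((E\<^sup>2 - B\<^sup>2) / (r - 1)))
     \<longleftrightarrow> ((z0 + B)\<^sup>2 < E\<^sup>2 \<and> (r - 1) * z0\<^sup>2 = E\<^sup>2 - B\<^sup>2)"
proof -
  have "(2 * E / (E - (-B)) < r \<and> r < 2 * E / (E + (-B)) \<and> 2 * E / (E + (-B)) < 1 \<and> (-z0) = - sqrt ((E\<^sup>2 - (-B)\<^sup>2) / (r - 1)))
     \<longleftrightarrow> (((-z0) + (-B))\<^sup>2 < E\<^sup>2 \<and> (r - 1) * (-z0)\<^sup>2 = E\<^sup>2 - (-B)\<^sup>2)"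
    using caseIIa[of E "-B" "-z0" r] E z0 by simp
  then show ?thesis by (simp add: power2_eq_square algebra_simps)
qed



lemma arith:
  fixes E B z0 r :: real and L :: bool
  assumes E: "E > 0" and z0: "z0 \<noteq> 0" and L: "L \<longleftrightarrow> r = 1"
  shows "((E > \<bar>B\<bar> \<and> 1 < 2 * E / (E + B) \<and> 2 * E / (E + B) < r \<and> z0 = - sqrt ((E\<^sup>2 - B\<^sup>2) / (r - 1)))
    \<or> (E > \<bar>B\<bar> \<and> 1 < 2 * E / (E - B) \<and> 2 * E / (E - B) < r \<and> z0 = sqrt ((E\<^sup>2 - B\<^sup>2) / (r - 1)))
    \<or> (0 < E \<and> E < B \<and> 2 * E / (E - \<bar>B\<bar>) < r \<and> r < 2 * E / (E + \<bar>B\<bar>) \<and> 2 * E / (E + \<bar>B\<bar>) < 1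
         \<and> z0 = - sqrt ((E\<^sup>2 - B\<^sup>2) / (r - 1)))
    \<or> (B < 0 \<and> 0 < E \<and> E < \<bar>B\<bar> \<and> 2 * E / (E - \<bar>B\<bar>) < r \<and> r < 2 * E / (E + \<bar>B\<bar>)
         \<and> 2 * E / (E + \<bar>B\<bar>) < 1 \<and> z0 = sqrt ((E\<^sup>2 - B\<^sup>2) / (r - 1)))
    \<or> (E = B \<and> L \<and> - 2 * B < z0 \<and> z0 < 0)
    \<or> (E = - B \<and> L \<and> 0 < z0 \<and> z0 < - 2 * B))
    \<longleftrightarrow> ((z0 + B)\<^sup>2 < E\<^sup>2 \<and> (r - 1) * z0\<^sup>2 = E\<^sup>2 - B\<^sup>2)"
proof (cases "E > \<bar>B\<bar>")
  case True
  have n: "(E > \<bar>B\<bar>) = True" "(E = B) = False" "(E = - B) = False" "(E < B) = False" "(E < \<bar>B\<bar>) = False"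
    using True by auto
  show ?thesis by (simp only: n simp_thms caseI[OF True z0, of r])
next
  case False
  show ?thesis
  proof (cases "E < \<bar>B\<bar>")
    case lt: True
    show ?thesis
    proof (cases "B > 0")
      case True
      have EB: "E < B" using lt True by simp
      have ab: "\<bar>B\<bar> = B" using True by simp
      have n: "(E > B) = False" "(E = B) = False" "(E = - B) = False" "(B < 0) = False" "(0 < E) = True" "(E < B) = True"
        using EB True E by auto
      show ?thesis unfolding ab by (simp only: n simp_thms caseIIa[OF E EB z0, of r])
    next
      case Bn: False
      have EB: "E < - B" using lt Bn by simp
      have ab: "\<bar>B\<bar> = - B" using Bn by simp
      have n: "(E > - B) = False" "(E = B) = False" "(E = - B) = False" "(B < 0) = True" "(0 < E) = True" "(E < B) = False" "(E < - B) = True"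
        using EB Bn E by auto
      show ?thesis unfolding ab by (simp only: n simp_thms diff_minus_eq_add add_uminus_conv_diff caseIIb[OF E EB z0, of r])
    qed
  next
    case ge: False
    then have eq: "E = \<bar>B\<bar>" using False by simp
    have D: "E\<^sup>2 - B\<^sup>2 = 0" using eq by simp
    have zp: "z0\<^sup>2 \<noteq> 0" using z0 by simp
    have R: "(r - 1) * z0\<^sup>2 = E\<^sup>2 - B\<^sup>2 \<longleftrightarrow> r = 1" unfolding D using zp by simp
    have S: "(z0 + B)\<^sup>2 < E\<^sup>2 \<longleftrightarrow> \<bar>z0 + B\<bar> < \<bar>B\<bar>"
      using abs_le_square_iff[of E "z0 + B"] eq by (simp add: not_le[symmetric])
    show ?thesis
    proof (cases "B > 0")
      case True
      have ab: "\<bar>B\<bar> = B" using True by simp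
      have EB: "E = B" using eq ab by simp
      have n: "\<not> E > \<bar>B\<bar>" "\<not> E < B" "\<not> B < 0" "E \<noteq> - B" using EB True by auto
      have T: "\<bar>z0 + B\<bar> < \<bar>B\<bar> \<longleftrightarrow> (- 2 * B < z0 \<and> z0 < 0)" using True by auto
      have n2: "(E = B) \<longleftrightarrow> True" using EB by simp
      show ?thesis unfolding R S T L apply (simp only: n n2 simp_thms)
      by blast
    next
      case False
      have ab: "\<bar>B\<bar> = - B" using False by simp
      have EB: "E = - B" using eq ab by simp
      have n: "\<not> E > \<bar>B\<bar>" "\<not> E < B" "\<not> E < \<bar>B\<bar>" "E \<noteq> B" using EB E ab by auto
      have T: "\<bar>z0 + B\<bar> < \<bar>B\<bar> \<longleftrightarrow> (0 < z0 \<and> z0 < - 2 * B)" using False by auto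
      have n2: "(E = - B) \<longleftrightarrow> True" using EB by simp
      show ?thesis unfolding R S T L apply (simp only: n n2 simp_thms)
      by blast
    qed
  qed
qed

theorem lemma4p5:
  fixes A B z\<^sub>\<gamma> E z0 :: real and l :: int
  assumes "A > 0" and "z\<^sub>\<gamma> \<noteq> 0" and "E > 0" and "l \<noteq> 0" and "z0 \<noteq> 0"
  defines "r \<equiv> z\<^sub>\<gamma> / (pi * A * real_of_int l)"
  defines "\<omega> \<equiv> 2 * pi * A * real_of_int l / z0"
  defines "conds \<equiv>
      (E > \<bar>B\<bar> \<and> 1 < 2 * E / (E + B) \<and> 2 * E / (E + B) < r \<and> z0 = - sqrt ((E\<^sup>2 - B\<^sup>2) / (r - 1)))
    \<or> (E > \<bar>B\<bar> \<and> 1 < 2 * E / (E - B) \<and> 2 * E / (E - B) < r \<and> z0 = sqrt ((E\<^sup>2 - B\<^sup>2) / (r - 1)))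
    \<or> (0 < E \<and> E < B \<and> 2 * E / (E - \<bar>B\<bar>) < r \<and> r < 2 * E / (E + \<bar>B\<bar>) \<and> 2 * E / (E + \<bar>B\<bar>) < 1
         \<and> z0 = - sqrt ((E\<^sup>2 - B\<^sup>2) / (r - 1)))
    \<or> (B < 0 \<and> 0 < E \<and> E < \<bar>B\<bar> \<and> 2 * E / (E - \<bar>B\<bar>) < r \<and> r < 2 * E / (E + \<bar>B\<bar>)
         \<and> 2 * E / (E + \<bar>B\<bar>) < 1 \<and> z0 = sqrt ((E\<^sup>2 - B\<^sup>2) / (r - 1)))
    \<or> (E = B \<and> real_of_int l = z\<^sub>\<gamma> / (pi * A) \<and> - 2 * B < z0 \<and> z0 < 0)
    \<or> (E = - B \<and> real_of_int l = z\<^sub>\<gamma> / (pi * A) \<and> 0 < z0 \<and> z0 < - 2 * B)"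
  shows "((\<exists>u0 v0. spiraling u0 v0 z0 \<and> mag_energy A B u0 v0 z0 = E
              \<and> periodic_with (central_elt z\<^sub>\<gamma>) (mag_geod A B u0 v0 z0) \<omega>)
          \<longleftrightarrow> conds)
       \<and> (conds \<longrightarrow> (\<forall>u0 v0. u0\<^sup>2 + v0\<^sup>2 = A * (E\<^sup>2 - (z0 + B)\<^sup>2) \<longrightarrow>
              spiraling u0 v0 z0 \<and> mag_energy A B u0 v0 z0 = E
              \<and> periodic_with (central_elt z\<^sub>\<gamma>) (mag_geod A B u0 v0 z0) \<omega>))"
proof -
  define P where "P = ((z0 + B)\<^sup>2 < E\<^sup>2 \<and> (r - 1) * z0\<^sup>2 = E\<^sup>2 - B\<^sup>2)"
  have pAl: "pi * A * real_of_int l \<noteq> 0" using assms(1,4) by simp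
  have L: "real_of_int l = z\<^sub>\<gamma> / (pi * A) \<longleftrightarrow> r = 1"
    unfolding r_def using pAl assms(1) by (auto simp: field_simps)
  have C: "conds \<longleftrightarrow> P" unfolding conds_def P_def by (rule arith[OF assms(3) assms(5) L])
  have K: "(spiraling u0 v0 z0 \<and> mag_energy A B u0 v0 z0 = E
      \<and> periodic_with (central_elt z\<^sub>\<gamma>) (mag_geod A B u0 v0 z0) \<omega>)
   \<longleftrightarrow> (u0\<^sup>2 + v0\<^sup>2 = A * (E\<^sup>2 - (z0 + B)\<^sup>2) \<and> P)" for u0 v0
    unfolding \<omega>_def P_def r_def by (rule key[OF assms(1,2,3,4,5)])
  have ex: "(\<exists>u0 v0. spiraling u0 v0 z0 \<and> mag_energy A B u0 v0 z0 = E
              \<and> periodic_with (central_elt z\<^sub>\<gamma>) (mag_geod A B u0 v0 z0) \<omega>) \<longleftrightarrow> P"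
  proof
    assume "\<exists>u0 v0. spiraling u0 v0 z0 \<and> mag_energy A B u0 v0 z0 = E
              \<and> periodic_with (central_elt z\<^sub>\<gamma>) (mag_geod A B u0 v0 z0) \<omega>"
    then show P using K by blast
  next
    assume p: P
    define u where "u = sqrt (A * (E\<^sup>2 - (z0 + B)\<^sup>2))"
    have nn: "A * (E\<^sup>2 - (z0 + B)\<^sup>2) \<ge> 0" using p assms(1) unfolding P_def by simp
    have hu: "u\<^sup>2 + 0\<^sup>2 = A * (E\<^sup>2 - (z0 + B)\<^sup>2)" unfolding u_def using nn by simp
    have "spiraling u 0 z0 \<and> mag_energy A B u 0 z0 = E
              \<and> periodic_with (central_elt z\<^sub>\<gamma>) (mag_geod A B u 0 z0) \<omega>"
      by (rule iffD2[OF K[of u 0]]) (rule conjI[OF hu p])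
    then show "\<exists>u0 v0. spiraling u0 v0 z0 \<and> mag_energy A B u0 v0 z0 = E
              \<and> periodic_with (central_elt z\<^sub>\<gamma>) (mag_geod A B u0 v0 z0) \<omega>"
      by (intro exI)
  qed
  show ?thesis
  proof (rule conjI)
    show "(\<exists>u0 v0. spiraling u0 v0 z0 \<and> mag_energy A B u0 v0 z0 = E
              \<and> periodic_with (central_elt z\<^sub>\<gamma>) (mag_geod A B u0 v0 z0) \<omega>) \<longleftrightarrow> conds"
      unfolding C by (rule ex)
  next
    show "conds \<longrightarrow> (\<forall>u0 v0. u0\<^sup>2 + v0\<^sup>2 = A * (E\<^sup>2 - (z0 + B)\<^sup>2) \<longrightarrow>
              spiraling u0 v0 z0 \<and> mag_energy A B u0 v0 z0 = E
              \<and> periodic_with (central_elt z\<^sub>\<gamma>) (mag_geod A B u0 v0 z0) \<omega>)"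
    proof (intro impI allI)
    fix u0 v0
    assume hc: conds and heq: "u0\<^sup>2 + v0\<^sup>2 = A * (E\<^sup>2 - (z0 + B)\<^sup>2)"
    have hP: P using hc C by (rule iffD1[rotated])
    show "spiraling u0 v0 z0 \<and> mag_energy A B u0 v0 z0 = E
              \<and> periodic_with (central_elt z\<^sub>\<gamma>) (mag_geod A B u0 v0 z0) \<omega>"
      by (rule iffD2[OF K[of u0 v0]]) (rule conjI[OF heq hP])
    qed
  qed
qed

end
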